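(* Let $1\le k\le 6$, let $\theta\in(\pi/2,\pi)$ be sufficiently close to $\pi/2$ and $\kappa>0$. For each integer $l\in\{0,1,\dots,2k\}$ there is a constant $c>0$, independent of $\tau>0$ and of $z$, such that for all $\tau>0$ and all $z\in\Gamma^\tau_{\theta,\kappa}$: $$\left|\frac{\gamma_l(e^{-z\tau})}{l!}\tau^{l+1}-\frac{1}{z^{l+1}}\right|\le\begin{cases} c\,\tau^{l+1}, & l=0 \text{ or } l\in\{1,3,\dots,2k-1\},\\ c\,\tau^{l+2}|z|, & l\in\{2,4,\dots,2k\}.\end{cases}$$
   Context: For real $p\ge 0$ let $\gamma_p(\xi)=\sum_{n=1}^\infty n^p\xi^n$ for $|\xi|<1$ (extended analytically, e.g. $\gamma_l(\xi)$ is a rational function of $\xi$ with only pole at $\xi=1$ for integer $l$). For $\theta\in(\pi/2,\pi)$ and $\kappa>0$, $\Gamma_{\theta,\kappa}=\{z\in\mathbb C:|z|=\kappa,|\arg z|\le\theta\}\cup\{z=re^{\pm i\theta}:r\ge\kappa\}$, and for $\tau>0$, $\Gamma^\tau_{\theta,\kappa}=\{z\in\Gamma_{\theta,\kappa}:|\operatorname{Im}z|\le\pi/\tau\}$. *)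

theory Defs
  imports "HOL-Analysis.Analysis"
begin

text \<open>gamma_l for integer l >= 0, as the rational function
  gamma_0(xi) = xi/(1-xi), gamma_(l+1)(xi) = xi * gamma_l'(xi);
  for |xi|<1 this equals sum_{n>=1} n^l xi^n, and it is the analytic
  continuation to C - {1}.\<close>
fun gamma_int :: "nat \<Rightarrow> complex \<Rightarrow> complex" where
  "gamma_int 0 = (\<lambda>\<xi>. \<xi> / (1 - \<xi>))"
| "gamma_int (Suc l) = (\<lambda>\<xi>. \<xi> * deriv (gamma_int l) \<xi>)"

definition Gamma_contour :: "real \<Rightarrow> real \<Rightarrow> complex set" where
  "Gamma_contour \<theta> \<kappa> =
     {z. cmod z = \<kappa> \<and> \<bar>Arg z\<bar> \<le> \<theta>}
     \<union> {z. \<exists>r\<ge>\<kappa>. z = complex_of_real r * cis \<theta> \<or> z = complex_of_real r * cis (-\<theta>)}"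

definition Gamma_contour_tau :: "real \<Rightarrow> real \<Rightarrow> real \<Rightarrow> complex set" where
  "Gamma_contour_tau \<theta> \<kappa> \<tau> = {z \<in> Gamma_contour \<theta> \<kappa>. \<bar>Im z\<bar> \<le> pi / \<tau>}"

end

theory Submission imports Defs "HOL-Complex_Analysis.Complex_Analysis" begin

definition Aq :: "complex \<Rightarrow> complex" where
  "Aq w = (if w = 0 then 1/2 else (exp w - 1 - w) / w^2)"
definition Bq :: "complex \<Rightarrow> complex" where "Bq w = 1 + w * Aq w"
definition Gq :: "complex \<Rightarrow> complex" where "Gq w = - Aq w / Bq w"
definition Sq :: "complex set" where "Sq = {w. Bq w \<noteq> 0}"
definition Eq :: "complex \<Rightarrow> complex" where "Eq w = 1 / (exp w - 1)"

lemma Aq_sums: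
  assumes "w \<noteq> 0"
  shows "(\<lambda>n. (1 / fact (n+2)) * w^n) sums Aq w"
proof -
  have "(\<lambda>n. w^n /\<^sub>R fact n) sums exp w" by (rule exp_converges)
  hence "(\<lambda>n. w^(Suc n) /\<^sub>R fact (Suc n)) sums (exp w - 1)"
    using sums_Suc_iff[of "\<lambda>n. w^n /\<^sub>R fact n" "exp w - 1"] by simp
  hence "(\<lambda>n. w^(Suc (Suc n)) /\<^sub>R fact (Suc (Suc n))) sums (exp w - 1 - w)"
    using sums_Suc_iff[of "\<lambda>n. w^(Suc n) /\<^sub>R fact (Suc n)" "exp w - 1 - w"] by simp
  hence "(\<lambda>n. (w^(Suc (Suc n)) /\<^sub>R fact (Suc (Suc n))) / w^2) sums ((exp w - 1 - w) / w^2)"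
    by (rule sums_divide)
  moreover have "\<And>n. (w^(Suc (Suc n)) /\<^sub>R fact (Suc (Suc n))) / w^2 = (1 / fact (n+2)) * w^n"
  proof -
    fix n
    have "w^(Suc (Suc n)) = w^2 * w^n" by (simp add: power2_eq_square)
    thus "(w^(Suc (Suc n)) /\<^sub>R fact (Suc (Suc n))) / w^2 = (1 / fact (n+2)) * w^n"
      using assms by (simp add: scaleR_conv_of_real divide_simps power2_eq_square del: fact_Suc)
  qed
  ultimately show ?thesis using assms by (simp add: Aq_def)
qed

lemma Aq_holo: "Aq holomorphic_on UNIV"
proof (rule no_isolated_singularity'[where K="{0}"])
  have "summable (\<lambda>n. (1 / fact (n+2)) * (1::complex)^n)"
    using Aq_sums[of 1] sums_summable by force
  hence "isCont (\<lambda>x::complex. \<Sum>n. (1 / fact (n+2)) * x^n) 0"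
    using isCont_powser[of "\<lambda>n. (1 / fact (n+2))::complex" "1::complex" "0::complex"] by simp
  hence "((\<lambda>x::complex. \<Sum>n. (1 / fact (n+2)) * x^n) \<longlongrightarrow> 1/2) (at 0)"
    unfolding isCont_def powser_zero by simp
  hence "(Aq \<longlongrightarrow> 1/2) (at 0)"
    by (rule Lim_transform_within_open[where s=UNIV]) (use sums_unique[OF Aq_sums] in auto)
  thus "\<And>z. z \<in> {0} \<Longrightarrow> (Aq \<longlongrightarrow> Aq z) (at z within UNIV)"
    by (simp add: Aq_def)
  have "(\<lambda>w. (exp w - 1 - w) / w^2) holomorphic_on UNIV - {0}"
    by (intro holomorphic_intros) auto
  thus "Aq holomorphic_on UNIV - {0}"
    by (rule holomorphic_transform) (auto simp: Aq_def)
qed auto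

lemma Bq_holo: "Bq holomorphic_on UNIV"
  unfolding Bq_def[abs_def] using Aq_holo by (intro holomorphic_intros) auto

lemma Sq_open: "open Sq"
  unfolding Sq_def
  by (rule open_Collect_neq) (auto intro: holomorphic_on_imp_continuous_on Bq_holo)

lemma Gq_holo: "Gq holomorphic_on Sq"
  unfolding Gq_def[abs_def] Sq_def using Aq_holo Bq_holo
  by (intro holomorphic_intros) (auto intro: holomorphic_on_subset)

lemma Bq_eq: "w \<noteq> 0 \<Longrightarrow> Bq w = (exp w - 1) / w"
  by (simp add: Bq_def Aq_def field_simps power2_eq_square)

lemma Sq_iff: "w \<in> Sq \<longleftrightarrow> w = 0 \<or> exp w \<noteq> 1"
  by (cases "w = 0") (auto simp: Sq_def Bq_eq, simp add: Bq_def Aq_def)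

lemma Gq_eq: "w \<noteq> 0 \<Longrightarrow> exp w \<noteq> 1 \<Longrightarrow> Gq w = Eq w - 1 / w"
  by (simp add: Gq_def Bq_eq Eq_def Aq_def field_simps power2_eq_square)

lemma strip_exp: "\<bar>Im w\<bar> \<le> pi \<Longrightarrow> w \<noteq> 0 \<Longrightarrow> exp w \<noteq> 1"
proof
  assume h: "\<bar>Im w\<bar> \<le> pi" "w \<noteq> 0" "exp w = 1"
  then obtain n :: int where n: "Re w = 0" "Im w = of_int (2*n) * pi" by (auto simp: exp_eq_1)
  have "\<bar>of_int (2*n)\<bar> * pi \<le> 1 * pi" using h(1) n by (simp add: abs_mult)
  hence "\<bar>of_int (2*n)::real\<bar> \<le> 1" by simp
  hence "n = 0" by linarith
  thus False using n h(2) complex_eq_iff by auto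
qed

lemma Gq_zero: "Gq 0 = -1/2" by (simp add: Gq_def Bq_def Aq_def)

lemma Sq_neg: "w \<in> Sq \<Longrightarrow> -w \<in> Sq"
  by (auto simp: Sq_iff exp_minus)

lemma Gq_sym: "w \<in> Sq \<Longrightarrow> Gq (-w) = -1 - Gq w"
proof (cases "w = 0")
  case True thus ?thesis by (simp add: Gq_zero)
next
  case False
  assume "w \<in> Sq"
  hence e: "exp w \<noteq> 1" using False by (simp add: Sq_iff)
  hence e2: "exp (-w) \<noteq> 1" by (simp add: exp_minus)
  have "exp w - 1 \<noteq> 0" using e by simp
  moreover have "exp w \<noteq> 0" by simp
  ultimately show ?thesis using False e e2
    by (simp add: Gq_eq Eq_def exp_minus field_simps)
qed


lemma gamma_holo: "gamma_int l holomorphic_on (-{1})"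
proof (induction l)
  case 0
  have "(\<lambda>\<xi>::complex. \<xi> / (1 - \<xi>)) holomorphic_on (-{1})"
    by (intro holomorphic_intros) auto
  thus ?case by simp
next
  case (Suc l)
  have "deriv (gamma_int l) holomorphic_on (-{1})"
    using Suc by (intro holomorphic_deriv) auto
  hence "(\<lambda>\<xi>. \<xi> * deriv (gamma_int l) \<xi>) holomorphic_on (-{1})"
  proof -
    have "(\<lambda>\<xi>::complex. \<xi>) holomorphic_on (-{1})" by simp
    thus ?thesis using holomorphic_on_mult \<open>deriv (gamma_int l) holomorphic_on (-{1})\<close> by blast
  qed
  thus ?case by simp
qed

lemma T_open: "open {w::complex. exp w \<noteq> 1}"
  by (rule open_Collect_neq) (auto intro: continuous_intros)

lemma Eq_holo: "Eq holomorphic_on {w. exp w \<noteq> 1}"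
  unfolding Eq_def[abs_def] by (intro holomorphic_intros) auto

lemma gamma_E: "exp w \<noteq> 1 \<Longrightarrow> gamma_int l (exp (-w)) = (-1)^l * (deriv ^^ l) Eq w"
proof (induction l arbitrary: w)
  case 0
  have "exp w \<noteq> 0" by simp
  thus ?case using 0 by (simp add: Eq_def exp_minus field_simps)
next
  case (Suc l)
  define T where "T = {w::complex. exp w \<noteq> 1}"
  have wT: "w \<in> T" using Suc.prems by (simp add: T_def)
  have e1: "exp (-w) \<in> -{1}" using Suc.prems by (simp add: exp_minus)
  have d1: "((\<lambda>w. gamma_int l (exp (-w))) has_field_derivative
      deriv (gamma_int l) (exp (-w)) * (- exp (-w))) (at w)"
  proof -
    have h: "(gamma_int l has_field_derivative deriv (gamma_int l) (exp (-w))) (at (exp(-w)))"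
      using holomorphic_derivI[OF gamma_holo _ e1] by auto
    show ?thesis by (rule DERIV_chain2[where g="\<lambda>w. exp(-w)" and x=w, OF h]) (auto intro!: derivative_eq_intros)
  qed
  have hol: "(deriv ^^ l) Eq holomorphic_on T"
    unfolding T_def by (intro holomorphic_higher_deriv Eq_holo T_open)
  have d2: "((\<lambda>w. (-1)^l * (deriv ^^ l) Eq w) has_field_derivative
      (-1)^l * deriv ((deriv ^^ l) Eq) w) (at w)"
    by (intro DERIV_cmult holomorphic_derivI[OF hol]) (use wT T_open in \<open>auto simp: T_def\<close>)
  have d3: "((\<lambda>w. gamma_int l (exp (-w))) has_field_derivative
      (-1)^l * deriv ((deriv ^^ l) Eq) w) (at w)"
    by (rule has_field_derivative_transform_within_open[OF d2, where S=T])
       (use wT T_open Suc.IH in \<open>auto simp: T_def\<close>)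
  have "deriv (gamma_int l) (exp (-w)) * (- exp (-w)) = (-1)^l * deriv ((deriv ^^ l) Eq) w"
    using DERIV_unique[OF d1 d3] .
  hence "exp (- w) * deriv (gamma_int l) (exp (- w)) = - ((- 1) ^ l * deriv ((deriv ^^ l) Eq) w)"
    by (metis minus_equation_iff mult.commute mult_minus_right)
  thus ?case by simp
qed

lemma inv_hd: "w \<noteq> 0 \<Longrightarrow> (deriv ^^ l) (\<lambda>w::complex. 1 / w) w = (-1)^l * fact l / w^(l+1)"
proof (induction l arbitrary: w)
  case 0 thus ?case by simp
next
  case (Suc l)
  have d: "((\<lambda>w. (-1)^l * fact l / w^(l+1)) has_field_derivative
     (-1)^(Suc l) * fact (Suc l) / w^(Suc l + 1)) (at w)"
    using Suc.prems
    apply (auto intro!: derivative_eq_intros simp: divide_simps)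
    apply (cases l) apply (auto simp: algebra_simps)
    done
  have "((deriv ^^ l) (\<lambda>w::complex. 1 / w) has_field_derivative
     (-1)^(Suc l) * fact (Suc l) / w^(Suc l + 1)) (at w)"
    by (rule has_field_derivative_transform_within_open[OF d, where S="-{0}"])
       (use Suc in auto)
  thus ?case by (simp add: DERIV_imp_deriv del: fact_Suc power_Suc)
qed


lemma main_eq:
  assumes "\<bar>Im w\<bar> \<le> pi" "w \<noteq> 0"
  shows "gamma_int l (exp (-w)) / fact l - 1 / w^(l+1) = (-1)^l * (deriv ^^ l) Gq w / fact l"
proof -
  define T where "T = {w::complex. exp w \<noteq> 1}"
  have e: "exp w \<noteq> 1" using strip_exp assms by blast
  have wT: "w \<in> T" using e by (simp add: T_def)
  have oT: "open T" using T_open by (simp add: T_def)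
  have T0: "\<And>u. u \<in> T \<Longrightarrow> u \<noteq> 0" by (auto simp: T_def)
  have "eventually (\<lambda>u. u \<in> T) (nhds w)" using oT wT eventually_nhds_in_open by blast
  hence ev: "eventually (\<lambda>u. Eq u = Gq u + 1/u) (nhds w)"
    by eventually_elim (use T0 in \<open>auto simp: Gq_eq T_def\<close>)
  have GT: "Gq holomorphic_on T"
    by (rule holomorphic_on_subset[OF Gq_holo]) (auto simp: T_def Sq_iff)
  have IT: "(\<lambda>u::complex. 1/u) holomorphic_on T"
    using T0 by (intro holomorphic_intros) auto
  have "(deriv ^^ l) Eq w = (deriv ^^ l) (\<lambda>u. Gq u + 1/u) w"
    by (rule higher_deriv_cong_ev[OF ev refl])
  also have "\<dots> = (deriv ^^ l) Gq w + (deriv ^^ l) (\<lambda>u. 1/u) w"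
    by (rule higher_deriv_add[OF GT IT oT wT])
  also have "\<dots> = (deriv ^^ l) Gq w + (-1)^l * fact l / w^(l+1)"
    using inv_hd assms(2) by simp
  finally have "gamma_int l (exp (-w)) = (-1)^l * ((deriv ^^ l) Gq w + (-1)^l * fact l / w^(l+1))"
    using gamma_E[OF e] by simp
  also have "\<dots> = (-1)^l * (deriv ^^ l) Gq w + fact l / w^(l+1)"
    by (simp add: algebra_simps flip: power_mult_distrib)
  finally show ?thesis by (simp add: field_simps)
qed

lemma D_zero:
  assumes "even l" "l \<noteq> 0"
  shows "(deriv ^^ l) Gq 0 = 0"
proof -
  have S0: "0 \<in> Sq" by (simp add: Sq_iff)
  have "(deriv ^^ l) (\<lambda>w. Gq (-1 * w)) 0 = (-1)^l * (deriv ^^ l) Gq (-1 * 0)"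
    by (rule higher_deriv_compose_linear[OF Gq_holo Sq_open Sq_open S0]) (auto intro: Sq_neg)
  hence 1: "(deriv ^^ l) (\<lambda>w. Gq (-1 * w)) 0 = (deriv ^^ l) Gq 0"
    using assms by simp
  have "eventually (\<lambda>u. u \<in> Sq) (nhds 0)" using Sq_open S0 eventually_nhds_in_open by blast
  hence ev: "eventually (\<lambda>u. Gq (-1 * u) = -1 - Gq u) (nhds 0)"
    by eventually_elim (auto simp: Gq_sym)
  have "(deriv ^^ l) (\<lambda>w. Gq (-1 * w)) 0 = (deriv ^^ l) (\<lambda>w. -1 - Gq w) 0"
    by (rule higher_deriv_cong_ev[OF ev refl])
  also have "\<dots> = (deriv ^^ l) (\<lambda>w. -1) 0 - (deriv ^^ l) Gq 0"
    by (rule higher_deriv_diff[OF _ Gq_holo Sq_open S0]) auto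
  also have "\<dots> = - (deriv ^^ l) Gq 0" using assms by simp
  finally show ?thesis using 1 by simp
qed

lemma G_small:
  assumes "\<bar>Re u\<bar> > 1"
  shows "u \<in> Sq" "cmod (Gq u) < 3"
proof -
  have u0: "u \<noteq> 0" using assms by auto
  have e: "exp u \<noteq> 1" using assms by (auto simp: exp_eq_1)
  show "u \<in> Sq" using e by (simp add: Sq_iff)
  have "cmod (1/u) < 1"
  proof -
    have "1 < \<bar>Re u\<bar>" by fact
    also have "\<dots> \<le> cmod u" by (rule abs_Re_le_cmod)
    finally show ?thesis by (simp add: norm_divide divide_simps)
  qed
  moreover have "cmod (Eq u) < 2"
  proof -
    have ge: "exp (Re u) \<ge> 1 + Re u" "exp (- Re u) \<ge> 1 + - Re u" by (rule exp_ge_add_one_self)+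
    have "\<bar>exp (Re u) - 1\<bar> \<le> cmod (exp u - 1)"
      using norm_triangle_ineq3[of "exp u" 1] norm_exp_eq_Re[of u] by simp
    moreover have "\<bar>exp (Re u) - 1\<bar> > 1/2"
    proof (cases "Re u > 1")
      case True
      hence "exp (Re u) > 2" using ge(1) by linarith
      hence "exp (Re u) - 1 > 1" by linarith
      thus ?thesis by linarith
    next
      case False
      hence "Re u < -1" using assms by auto
      hence "exp (- Re u) > 2" using ge by simp
      hence "exp (Re u) < 1/2" by (simp add: exp_minus field_simps)
      hence "exp (Re u) - 1 < 0" "exp (Re u) - 1 < -1/2" by linarith+
      thus ?thesis using abs_of_neg[of "exp (Re u) - 1"] by linarith
    qed
    ultimately have "cmod (exp u - 1) > 1/2" by simp
    thus ?thesis by (simp add: Eq_def norm_divide divide_less_eq)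
  qed
  ultimately have "cmod (Eq u - 1/u) < 3"
    using norm_triangle_ineq4[of "Eq u" "1/u"] by simp
  thus "cmod (Gq u) < 3" using Gq_eq[OF u0 e] by simp
qed

lemma far_bound:
  assumes "\<bar>Re w\<bar> \<ge> 2"
  shows "cmod ((deriv ^^ l) Gq w) \<le> 3 * fact l"
proof (cases "l = 0")
  case True thus ?thesis using G_small[of w] assms by simp
next
  case False
  have sub: "cball w 1 \<subseteq> Sq"
  proof
    fix u assume "u \<in> cball w 1"
    hence "\<bar>Re w - Re u\<bar> \<le> 1" using abs_Re_le_cmod[of "w - u"] by (simp add: dist_norm)
    hence "\<bar>Re u\<bar> > 1 \<or> Re u = 1 \<or> Re u = -1" using assms by linarith
    thus "u \<in> Sq" using G_small(1)[of u] by (auto simp: Sq_iff exp_eq_1)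
  qed
  have "cmod ((deriv ^^ l) Gq w) \<le> fact l * 3 / 1^l"
  proof (rule Cauchy_higher_deriv_bound[where y=0])
    show "Gq holomorphic_on ball w 1"
      using sub by (intro holomorphic_on_subset[OF Gq_holo]) auto
    show "continuous_on (cball w 1) Gq"
      using sub by (intro holomorphic_on_imp_continuous_on holomorphic_on_subset[OF Gq_holo])
    show "Gq u \<in> ball 0 3" if "u \<in> ball w 1" for u
    proof -
      have "\<bar>Re w - Re u\<bar> < 1" using that abs_Re_le_cmod[of "w - u"] by (simp add: dist_norm)
      hence "\<bar>Re u\<bar> > 1" using assms by linarith
      thus ?thesis using G_small(2)[of u] by simp
    qed
  qed (use False in auto)
  thus ?thesis by simp
qed

definition Kq :: "complex set" where "Kq = cbox (Complex (-2) (-pi)) (Complex 2 pi)"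

lemma Kq_mem: "w \<in> Kq \<longleftrightarrow> \<bar>Re w\<bar> \<le> 2 \<and> \<bar>Im w\<bar> \<le> pi"
  by (auto simp: Kq_def cbox_complex_eq)

lemma Kq_sub: "Kq \<subseteq> Sq"
  using strip_exp by (auto simp: Kq_mem Sq_iff)

lemma Kq_cont: "continuous_on Kq ((deriv ^^ l) Gq)"
  by (intro holomorphic_on_imp_continuous_on holomorphic_on_subset[OF _ Kq_sub]
        holomorphic_higher_deriv Gq_holo Sq_open)

lemma Kq_bound: "\<exists>M>0. \<forall>w\<in>Kq. cmod ((deriv ^^ l) Gq w) \<le> M"
proof -
  have "compact ((deriv ^^ l) Gq ` Kq)"
    by (rule compact_continuous_image[OF Kq_cont]) (simp add: Kq_def)
  hence "bounded ((deriv ^^ l) Gq ` Kq)" by (rule compact_imp_bounded)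
  thus ?thesis by (auto simp: bounded_pos)
qed

lemma D_bound: "\<exists>C>0. \<forall>w. \<bar>Im w\<bar> \<le> pi \<longrightarrow> cmod ((deriv ^^ l) Gq w) \<le> C"
proof -
  obtain M where M: "M > 0" "\<forall>w\<in>Kq. cmod ((deriv ^^ l) Gq w) \<le> M" using Kq_bound by blast
  show ?thesis
  proof (intro exI[of _ "M + 3 * fact l"] conjI allI impI)
    show "M + 3 * fact l > 0" using M by (simp add: add_pos_nonneg)
    fix w :: complex assume w: "\<bar>Im w\<bar> \<le> pi"
    show "cmod ((deriv ^^ l) Gq w) \<le> M + 3 * fact l"
    proof (cases "\<bar>Re w\<bar> \<le> 2")
      case True
      hence "cmod ((deriv ^^ l) Gq w) \<le> M" using M w by (auto simp: Kq_mem)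
      moreover have "(0::real) \<le> fact l" by simp
      ultimately show ?thesis by linarith
    next
      case False thus ?thesis using far_bound[of w l] M by auto
    qed
  qed
qed

lemma D_bound_even:
  assumes "even l" "l \<noteq> 0"
  shows "\<exists>C>0. \<forall>w. \<bar>Im w\<bar> \<le> pi \<longrightarrow> cmod ((deriv ^^ l) Gq w) \<le> C * cmod w"
proof -
  obtain M where M: "M > 0" "\<forall>w\<in>Kq. cmod ((deriv ^^ Suc l) Gq w) \<le> M" using Kq_bound by blast
  show ?thesis
  proof (intro exI[of _ "M + 3 * fact l"] conjI allI impI)
    show "M + 3 * fact l > 0" using M by (simp add: add_pos_nonneg)
    fix w :: complex assume w: "\<bar>Im w\<bar> \<le> pi"
    show "cmod ((deriv ^^ l) Gq w) \<le> (M + 3 * fact l) * cmod w"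
    proof (cases "\<bar>Re w\<bar> \<le> 2")
      case True
      hence wK: "w \<in> Kq" using w by (simp add: Kq_mem)
      have 0: "0 \<in> Kq" by (simp add: Kq_mem)
      have "cmod ((deriv ^^ l) Gq w - (deriv ^^ l) Gq 0) \<le> M * cmod (w - 0)"
      proof (rule field_differentiable_bound[where f'="(deriv ^^ Suc l) Gq"])
        show "convex Kq" by (simp add: Kq_def convex_box)
        show "((deriv ^^ l) Gq has_field_derivative (deriv ^^ Suc l) Gq z) (at z within Kq)"
          if "z \<in> Kq" for z
          using holomorphic_derivI[OF holomorphic_higher_deriv[OF Gq_holo Sq_open] Sq_open, of z l Kq]
            that Kq_sub by auto
      qed (use M wK 0 in auto)
      hence "cmod ((deriv ^^ l) Gq w) \<le> M * cmod w" using D_zero[OF assms] by simp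
      also have "\<dots> \<le> (M + 3 * fact l) * cmod w" by (intro mult_right_mono) auto
      finally show ?thesis .
    next
      case False
      hence "cmod w \<ge> 1" using abs_Re_le_cmod[of w] by linarith
      hence "3 * fact l \<le> 3 * fact l * cmod w" by simp
      also have "\<dots> \<le> (M + 3 * fact l) * cmod w" using M by (intro mult_right_mono) auto
      finally show ?thesis using far_bound[of w l] False by auto
    qed
  qed
qed


lemma key:
  assumes z: "z \<in> Gamma_contour_tau \<theta> \<kappa> \<tau>" and k: "\<kappa> > 0" and t: "\<tau> > 0"
  shows "cmod (gamma_int l (exp (- z * complex_of_real \<tau>)) / fact l * complex_of_real \<tau> ^ (l + 1)
               - 1 / z ^ (l + 1)) = \<tau>^(l+1) * cmod ((deriv ^^ l) Gq (z * complex_of_real \<tau>)) / fact l"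
    and "\<bar>Im (z * complex_of_real \<tau>)\<bar> \<le> pi" and "cmod (z * complex_of_real \<tau>) = \<tau> * cmod z"
proof -
  have z0: "z \<noteq> 0" using z k by (auto simp: Gamma_contour_tau_def Gamma_contour_def)
  have "\<bar>Im z\<bar> \<le> pi / \<tau>" using z by (simp add: Gamma_contour_tau_def)
  hence "\<bar>Im z\<bar> * \<tau> \<le> pi" using t by (simp add: field_simps)
  thus im: "\<bar>Im (z * complex_of_real \<tau>)\<bar> \<le> pi" using t by (simp add: abs_mult)
  show "cmod (z * complex_of_real \<tau>) = \<tau> * cmod z" using t by (simp add: norm_mult)
  define w where "w = z * complex_of_real \<tau>"
  have w0: "w \<noteq> 0" using z0 t by (simp add: w_def)
  have e: "exp (- z * complex_of_real \<tau>) = exp (-w)" by (simp add: w_def)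
  have zi: "1 / z^(l+1) = complex_of_real \<tau> ^ (l+1) / w^(l+1)"
    using t z0 by (simp add: w_def power_mult_distrib)
  have "gamma_int l (exp (- z * complex_of_real \<tau>)) / fact l * complex_of_real \<tau> ^ (l + 1)
               - 1 / z ^ (l + 1) = complex_of_real \<tau> ^ (l + 1) *
        (gamma_int l (exp (-w)) / fact l - 1 / w^(l+1))"
    unfolding e zi by (simp add: algebra_simps)
  also have "\<dots> = complex_of_real \<tau> ^ (l + 1) * ((-1)^l * (deriv ^^ l) Gq w / fact l)"
    using main_eq[of w l] im w0 by (simp add: w_def)
  finally show "cmod (gamma_int l (exp (- z * complex_of_real \<tau>)) / fact l * complex_of_real \<tau> ^ (l + 1)
               - 1 / z ^ (l + 1)) = \<tau>^(l+1) * cmod ((deriv ^^ l) Gq (z * complex_of_real \<tau>)) / fact l"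
    using t by (simp add: norm_mult norm_divide norm_power w_def)
qed

theorem lemma3p2:
  fixes k :: nat
  assumes "1 \<le> k" and "k \<le> 6"
  shows "\<exists>\<theta>0. pi / 2 < \<theta>0 \<and> \<theta>0 \<le> pi \<and>
    (\<forall>\<theta> \<kappa>::real. pi / 2 < \<theta> \<and> \<theta> < \<theta>0 \<and> \<kappa> > 0 \<longrightarrow>
      (\<forall>l \<le> 2 * k. \<exists>c > 0. \<forall>\<tau> > 0. \<forall>z \<in> Gamma_contour_tau \<theta> \<kappa> \<tau>.
         cmod (gamma_int l (exp (- z * complex_of_real \<tau>)) / fact l * complex_of_real \<tau> ^ (l + 1)
               - 1 / z ^ (l + 1))
         \<le> (if l = 0 \<or> odd l then c * \<tau> ^ (l + 1) else c * \<tau> ^ (l + 2) * cmod z)))"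
proof (rule exI[of _ pi], intro conjI allI impI)
  show "pi / 2 < pi" by simp
  show "pi \<le> pi" by simp
  fix \<theta> \<kappa> :: real and l :: nat
  assume h: "pi / 2 < \<theta> \<and> \<theta> < pi \<and> \<kappa> > 0" and "l \<le> 2 * k"
  hence k: "\<kappa> > 0" by simp
  have fp: "(0::real) < fact l" by simp
  show "\<exists>c > 0. \<forall>\<tau> > 0. \<forall>z \<in> Gamma_contour_tau \<theta> \<kappa> \<tau>.
         cmod (gamma_int l (exp (- z * complex_of_real \<tau>)) / fact l * complex_of_real \<tau> ^ (l + 1)
               - 1 / z ^ (l + 1))
         \<le> (if l = 0 \<or> odd l then c * \<tau> ^ (l + 1) else c * \<tau> ^ (l + 2) * cmod z)"
  proof (cases "l = 0 \<or> odd l")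
    case True
    obtain C where C: "C > 0" "\<forall>w. \<bar>Im w\<bar> \<le> pi \<longrightarrow> cmod ((deriv ^^ l) Gq w) \<le> C"
      using D_bound by blast
    show ?thesis
    proof (intro exI[of _ "C / fact l"] conjI allI impI ballI)
      show "C / fact l > 0" using C fp by simp
      fix \<tau> :: real and z assume t: "\<tau> > 0" and z: "z \<in> Gamma_contour_tau \<theta> \<kappa> \<tau>"
      note kk = key(1)[OF z k t, of l] key(2,3)[OF z k t]
      have "\<tau>^(l+1) * cmod ((deriv ^^ l) Gq (z * complex_of_real \<tau>)) / fact l \<le> \<tau>^(l+1) * C / fact l"
        using C kk(2) t fp by (intro divide_right_mono mult_left_mono) auto
      also have "\<tau>^(l+1) * C / fact l = C / fact l * \<tau>^(l+1)" by simp
      finally have X: "\<tau>^(l+1) * cmod ((deriv ^^ l) Gq (z * complex_of_real \<tau>)) / fact l \<le> C / fact l * \<tau>^(l+1)" .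
      show "cmod (gamma_int l (exp (- z * complex_of_real \<tau>)) / fact l * complex_of_real \<tau> ^ (l + 1)
               - 1 / z ^ (l + 1))
         \<le> (if l = 0 \<or> odd l then C / fact l * \<tau> ^ (l + 1) else C / fact l * \<tau> ^ (l + 2) * cmod z)"
        by (subst kk(1), simp only: True if_True X)
    qed
  next
    case False
    hence ev: "even l" "l \<noteq> 0" by auto
    obtain C where C: "C > 0" "\<forall>w. \<bar>Im w\<bar> \<le> pi \<longrightarrow> cmod ((deriv ^^ l) Gq w) \<le> C * cmod w"
      using D_bound_even[OF ev] by blast
    show ?thesis
    proof (intro exI[of _ "C / fact l"] conjI allI impI ballI)
      show "C / fact l > 0" using C fp by simp
      fix \<tau> :: real and z assume t: "\<tau> > 0" and z: "z \<in> Gamma_contour_tau \<theta> \<kappa> \<tau>"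
      note kk = key(1)[OF z k t, of l] key(2,3)[OF z k t]
      have "\<tau>^(l+1) * cmod ((deriv ^^ l) Gq (z * complex_of_real \<tau>)) / fact l
             \<le> \<tau>^(l+1) * (C * (\<tau> * cmod z)) / fact l"
      proof -
        have "cmod ((deriv ^^ l) Gq (z * complex_of_real \<tau>)) \<le> C * cmod (z * complex_of_real \<tau>)"
          using C(2) kk(2) by blast
        hence "cmod ((deriv ^^ l) Gq (z * complex_of_real \<tau>)) \<le> C * (\<tau> * cmod z)"
          using kk(3) by simp
        thus ?thesis using t fp by (intro divide_right_mono mult_left_mono) auto
      qed
      also have "\<dots> = C / fact l * \<tau> ^ (l + 2) * cmod z" by (simp add: field_simps)
      finally have X: "\<tau>^(l+1) * cmod ((deriv ^^ l) Gq (z * complex_of_real \<tau>)) / fact l \<le> C / fact l * \<tau> ^ (l + 2) * cmod z" .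
      show "cmod (gamma_int l (exp (- z * complex_of_real \<tau>)) / fact l * complex_of_real \<tau> ^ (l + 1)
               - 1 / z ^ (l + 1))
         \<le> (if l = 0 \<or> odd l then C / fact l * \<tau> ^ (l + 1) else C / fact l * \<tau> ^ (l + 2) * cmod z)"
        by (subst kk(1), simp only: False if_False X)
    qed
  qed
qed

end
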